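(* Let $\alpha>2$, and for $s_1,s_2>0$ define \[ f(s_1,s_2)=\frac{\int_0^\infty e^{-(s_1+s_2)x^{2/\alpha}}\frac{dx}{1+x}}{s_1\int_0^\infty x^{2/\alpha}e^{-(s_1+s_2)x^{2/\alpha}}\frac{dx}{1+x}}. \] Then for each fixed $s_1>0$, the function $s_2\mapsto f(s_1,s_2)$ is monotonically increasing on $(0,\infty)$. *)

theory Defs
  imports "HOL-Analysis.Analysis"
begin

definition f_ratio :: "real \<Rightarrow> real \<Rightarrow> real \<Rightarrow> real" where
  "f_ratio \<alpha> s1 s2 =
     (LBINT x:{0<..}. exp (- (s1 + s2) * x powr (2 / \<alpha>)) / (1 + x)) /
     (s1 * (LBINT x:{0<..}. x powr (2 / \<alpha>) * exp (- (s1 + s2) * x powr (2 / \<alpha>)) / (1 + x)))"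

end

theory Submission
  imports Defs
begin

lemma leb_to_lborel:
  fixes f :: "real \<Rightarrow> real"
  assumes "set_integrable lebesgue A f" "f \<in> borel_measurable lborel" "A \<in> sets lborel"
  shows "set_integrable lborel A f"
  using assms unfolding set_integrable_def
  by (subst (asm) integrable_completion) (auto)

lemma dom_int:
  fixes p :: real assumes p: "0 < p" "p < 1"
  shows "set_integrable lborel {0<..} (\<lambda>x. x powr (-p) / (1+x))"
proof -
  have I1: "set_integrable lebesgue {0<..1} (\<lambda>x::real. x powr (-p))"
    using p by (intro nonnegative_absolutely_integrable_1 integrable_on_powr_from_0') auto
  have I1': "set_integrable lebesgue {0<..1} (\<lambda>x::real. x powr (-p) / (1+x))"
  proof (rule set_integrable_bound[OF I1])
    show "set_borel_measurable lebesgue {0<..1} (\<lambda>x::real. x powr (-p) / (1+x))"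
      unfolding set_borel_measurable_def by (intro measurable_completion) measurable
    show "AE x in lebesgue. x \<in> {0<..1} \<longrightarrow> norm (x powr (-p) / (1+x)) \<le> norm (x powr (-p))"
      by (intro AE_I2) (auto simp: divide_le_eq)
  qed
  have I2: "set_integrable lebesgue {1..} (\<lambda>x::real. x powr (-1-p))"
    using p has_integral_powr_to_inf[of "-1-p" 1]
    by (intro nonnegative_absolutely_integrable_1) (auto simp: integrable_on_def)
  have I2': "set_integrable lebesgue {1..} (\<lambda>x::real. x powr (-p) / (1+x))"
  proof (rule set_integrable_bound[OF I2])
    show "set_borel_measurable lebesgue {1..} (\<lambda>x::real. x powr (-p) / (1+x))"
      unfolding set_borel_measurable_def by (intro measurable_completion) measurable
    have "x powr (-p) / (1+x) \<le> x powr (-1-p)" if "x \<ge> 1" for x :: real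
    proof -
      have "x powr (-1-p) = x powr (-p) / x" using that
        by (simp add: powr_diff powr_minus divide_simps)
      moreover have "x powr (-p) / (1+x) \<le> x powr (-p) / x" using that
        by (intro divide_left_mono) auto
      ultimately show ?thesis by simp
    qed
    then show "AE x in lebesgue. x \<in> {1..} \<longrightarrow> norm (x powr (-p) / (1+x)) \<le> norm (x powr (-1-p))"
      by (intro AE_I2) auto
  qed
  have "set_integrable lebesgue ({0<..1} \<union> {1..}) (\<lambda>x::real. x powr (-p) / (1+x))"
    by (rule set_integrable_Un[OF I1' I2']) auto
  moreover have "{0<..1} \<union> {1..} = {0::real<..}" by auto
  ultimately show ?thesis by (intro leb_to_lborel) (auto, measurable)
qed


lemma bounds:
  fixes p t x :: real assumes p: "0 < p" and t: "t > 0" and x: "x > 0"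
  shows "exp (- t * x powr p) \<le> (1/t) * x powr (-p)"
    and "x powr p * exp (- t * x powr p) \<le> (4/t^2) * x powr (-p)"
proof -
  define u where "u = t * x powr p"
  have u: "u > 0" using t x by (simp add: u_def)
  have xp: "x powr p > 0" using x by simp
  have e1: "exp u \<ge> u" using exp_ge_add_one_self[of u] by linarith
  have "exp (- t * x powr p) = 1 / exp u" by (simp add: u_def exp_minus field_simps)
  also have "\<dots> \<le> 1 / u" using u e1 by (intro divide_left_mono) auto
  also have "\<dots> = (1/t) * x powr (-p)" using t x by (simp add: u_def powr_minus field_simps)
  finally show "exp (- t * x powr p) \<le> (1/t) * x powr (-p)" .
  have e2: "exp u \<ge> (u/2)^2"
  proof -
    have "exp (u/2) \<ge> u/2" using exp_ge_add_one_self[of "u/2"] by linarith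
    hence "(u/2)^2 \<le> (exp (u/2))^2" using u by (intro power_mono) auto
    also have "\<dots> = exp u" by (simp add: power2_eq_square flip: exp_add)
    finally show ?thesis .
  qed
  have "x powr p * exp (- t * x powr p) = x powr p / exp u" by (simp add: u_def exp_minus field_simps)
  also have "\<dots> \<le> x powr p / (u/2)^2" using u e2 xp by (intro divide_left_mono) auto
  also have "\<dots> = (4/t^2) * x powr (-p)" using t x xp
    by (simp add: u_def powr_minus field_simps power2_eq_square)
  finally show "x powr p * exp (- t * x powr p) \<le> (4/t^2) * x powr (-p)" .
qed

lemma int_F:
  fixes p t :: real assumes p: "0 < p" "p < 1" and t: "t > 0"
  shows "set_integrable lborel {0<..} (\<lambda>x. exp (- t * x powr p) / (1+x))"
    and "set_integrable lborel {0<..} (\<lambda>x. x powr p * exp (- t * x powr p) / (1+x))"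
proof -
  have D: "set_integrable lborel {0<..} (\<lambda>x. (1/t) * (x powr (-p) / (1+x)))"
    by (rule set_integrable_mult_right[OF dom_int[OF p]])
  show "set_integrable lborel {0<..} (\<lambda>x. exp (- t * x powr p) / (1+x))"
  proof (rule set_integrable_bound[OF D])
    show "set_borel_measurable lborel {0<..} (\<lambda>x. exp (- t * x powr p) / (1+x))"
      unfolding set_borel_measurable_def by measurable
    have "exp (- t * x powr p) / (1+x) \<le> (1/t) * (x powr (-p) / (1+x))" if "x > 0" for x :: real
      using divide_right_mono[OF bounds(1)[OF p(1) t that], of "1+x"] that by simp
    then show "AE x in lborel. x \<in> {0<..} \<longrightarrow> norm (exp (- t * x powr p) / (1+x)) \<le> norm ((1/t) * (x powr (-p) / (1+x)))"
      using t by (intro AE_I2) auto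
  qed
  have D: "set_integrable lborel {0<..} (\<lambda>x. (4/t^2) * (x powr (-p) / (1+x)))"
    by (rule set_integrable_mult_right[OF dom_int[OF p]])
  show "set_integrable lborel {0<..} (\<lambda>x. x powr p * exp (- t * x powr p) / (1+x))"
  proof (rule set_integrable_bound[OF D])
    show "set_borel_measurable lborel {0<..} (\<lambda>x. x powr p * exp (- t * x powr p) / (1+x))"
      unfolding set_borel_measurable_def by measurable
    have "x powr p * exp (- t * x powr p) / (1+x) \<le> (4/t^2) * (x powr (-p) / (1+x))" if "x > 0" for x :: real
      using divide_right_mono[OF bounds(2)[OF p(1) t that], of "1+x"] that by simp
    then show "AE x in lborel. x \<in> {0<..} \<longrightarrow> norm (x powr p * exp (- t * x powr p) / (1+x)) \<le> norm ((4/t^2) * (x powr (-p) / (1+x)))"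
      using t by (intro AE_I2) auto
  qed
qed

lemma pos_int:
  fixes F :: "real \<Rightarrow> real" and c :: real
  assumes "set_integrable lborel {0<..} F" "c > 0" "\<And>x. x \<in> {1..2} \<Longrightarrow> F x \<ge> c"
    "\<And>x. x > 0 \<Longrightarrow> F x \<ge> 0"
  shows "(LBINT x:{0<..}. F x) > 0"
proof -
  have "integrable lborel (\<lambda>x. indicator {1..2::real} x * c)"
    by (intro integrable_mult_left integrable_real_indicator) auto
  hence "(LINT x|lborel. indicator {1..2::real} x * c) \<le> (LBINT x:{0<..}. F x)"
    unfolding set_lebesgue_integral_def using assms
    by (intro integral_mono) (auto simp: set_integrable_def indicator_def)
  moreover have "(LINT x|lborel. indicator {1..2::real} x * c) = c" by simp
  ultimately show ?thesis using assms(2) by linarith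
qed


lemma pointwise:
  fixes y c d :: real assumes "d \<ge> 0"
  shows "(y - c) * (exp (- d * y) - exp (- d * c)) \<le> 0"
proof (cases "y \<le> c")
  case True
  hence "exp (- d * y) \<ge> exp (- d * c)" using assms by (simp add: mult_left_mono)
  then show ?thesis using True by (intro mult_nonpos_nonneg) auto
next
  case False
  hence "exp (- d * y) \<le> exp (- d * c)" using assms by (simp add: mult_left_mono)
  then show ?thesis using False by (intro mult_nonneg_nonpos) auto
qed

lemma main_ineq:
  fixes p t1 t2 :: real assumes p: "0 < p" "p < 1" and t: "0 < t1" "t1 \<le> t2"
  defines "A \<equiv> \<lambda>t. LBINT x:{0<..}. exp (- t * x powr p) / (1+x)"
      and "B \<equiv> \<lambda>t. LBINT x:{0<..}. x powr p * exp (- t * x powr p) / (1+x)"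
  shows "A t1 * B t2 \<le> A t2 * B t1" "A t1 > 0" "B t1 > 0"
proof -
  have t2: "t2 > 0" using t by linarith
  note I = int_F[OF p t(1)] int_F[OF p t2]
  have posA: "A t > 0" if "t > 0" for t
    unfolding A_def
  proof (rule pos_int[OF int_F(1)[OF p that], of "exp (-2*t)/3"])
    fix x :: real assume x: "x \<in> {1..2}"
    have "x powr p \<le> x powr 1" using x p by (intro powr_mono) auto
    hence xp: "x powr p \<le> 2" using x by simp
    have "exp (-2*t) \<le> exp (- t * x powr p)" using xp that by (simp add: mult_left_mono)
    moreover have "1 + x \<le> 3" using x by simp
    ultimately show "exp (-2*t)/3 \<le> exp (- t * x powr p) / (1+x)"
      using x by (intro frac_le) auto
  qed auto
  have posB: "B t > 0" if "t > 0" for t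
    unfolding B_def
  proof (rule pos_int[OF int_F(2)[OF p that], of "exp (-2*t)/3"])
    fix x :: real assume x: "x \<in> {1..2}"
    have "x powr p \<le> x powr 1" using x p by (intro powr_mono) auto
    hence xp: "x powr p \<le> 2" using x by simp
    have xp1: "x powr p \<ge> 1" using x p by (simp add: ge_one_powr_ge_zero)
    have "exp (-2*t) \<le> exp (- t * x powr p)" using xp that by (simp add: mult_left_mono)
    also have "\<dots> \<le> x powr p * exp (- t * x powr p)" using xp1
      using mult_right_mono[OF xp1, of "exp (- t * x powr p)"] by simp
    finally have "exp (-2*t) \<le> x powr p * exp (- t * x powr p)" .
    moreover have "1 + x \<le> 3" using x by simp
    ultimately show "exp (-2*t)/3 \<le> x powr p * exp (- t * x powr p) / (1+x)"
      using x by (intro frac_le) auto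
  qed auto
  show "A t1 > 0" "B t1 > 0" using posA posB t by auto
  define c where "c = B t1 / A t1"
  define d where "d = t2 - t1"
  define k where "k = exp (- d * c)"
  have d: "d \<ge> 0" using t by (simp add: d_def)
  have cA: "c * A t1 = B t1" using posA[OF t(1)] by (simp add: c_def)
  have pw: "x powr p * exp (- t2 * x powr p) / (1+x) - c * (exp (- t2 * x powr p) / (1+x))
      - k * (x powr p * exp (- t1 * x powr p) / (1+x)) + c * k * (exp (- t1 * x powr p) / (1+x)) \<le> 0"
    if x: "x \<in> {0<..}" for x :: real
  proof -
    define y where "y = x powr p"
    have "(y - c) * (exp (- d * y) - k) \<le> 0"
      using pointwise[OF d, of y c] unfolding k_def .
    moreover have "exp (- t1 * y) / (1+x) \<ge> 0" using x by simp
    ultimately have "(y - c) * (exp (- d * y) - k) * (exp (- t1 * y) / (1+x)) \<le> 0"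
      by (rule mult_nonpos_nonneg)
    moreover have "exp (- d * y) * exp (- t1 * y) = exp (- t2 * y)"
      by (simp add: d_def algebra_simps flip: exp_add)
    ultimately show ?thesis unfolding y_def[symmetric]
      by (simp add: algebra_simps add_divide_distrib diff_divide_distrib)
  qed
  have "(LBINT x:{0<..}. x powr p * exp (- t2 * x powr p) / (1+x) - c * (exp (- t2 * x powr p) / (1+x))
      - k * (x powr p * exp (- t1 * x powr p) / (1+x)) + c * k * (exp (- t1 * x powr p) / (1+x)))
      \<le> (LBINT x:{0::real<..}. (0::real))"
  proof (rule set_integral_mono)
    show "set_integrable lborel {0<..} (\<lambda>x::real. 0::real)" by (simp add: set_integrable_def)
    show "set_integrable lborel {0<..} (\<lambda>x. x powr p * exp (- t2 * x powr p) / (1+x) - c * (exp (- t2 * x powr p) / (1+x))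
      - k * (x powr p * exp (- t1 * x powr p) / (1+x)) + c * k * (exp (- t1 * x powr p) / (1+x)))"
      using I by (intro set_integral_add set_integral_diff set_integrable_mult_right) auto
  qed (use pw in auto)
  hence "B t2 - c * A t2 - k * B t1 + c * k * A t1 \<le> 0"
    unfolding A_def B_def
    by (simp only: set_integral_add(2) set_integral_diff(2) set_integral_add(1) set_integral_diff(1)
        set_integrable_mult_right set_integral_mult_right I set_lebesgue_integral_zero)
  moreover have "c * k * A t1 = k * B t1" using cA by (simp add: algebra_simps)
  ultimately have "B t2 \<le> c * A t2" by linarith
  hence "A t1 * B t2 \<le> A t1 * (c * A t2)" using posA[OF t(1)] by (simp add: mult_left_mono)
  also have "\<dots> = A t2 * B t1" using cA by (simp add: algebra_simps)
  finally show "A t1 * B t2 \<le> A t2 * B t1" .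
qed

theorem lemma3:
  fixes \<alpha> s1 :: real
  assumes "\<alpha> > 2" and "s1 > 0"
  shows "mono_on {0<..} (\<lambda>s2. f_ratio \<alpha> s1 s2)"
proof (rule mono_onI)
  fix r s :: real assume rs: "r \<in> {0<..}" "s \<in> {0<..}" "r \<le> s"
  define p where "p = 2 / \<alpha>"
  have p: "0 < p" "p < 1" using assms by (auto simp: p_def)
  note M = main_ineq[OF p, of "s1 + r" "s1 + s"]
  have M': "0 < (LBINT x:{0<..}. x powr p * exp (- (s1 + s) * x powr p) / (1+x))"
    using main_ineq(3)[OF p, of "s1 + s" "s1 + s"] rs assms by simp
  show "f_ratio \<alpha> s1 r \<le> f_ratio \<alpha> s1 s"
    unfolding f_ratio_def p_def[symmetric]
    using M rs assms M' by (simp add: divide_simps mult_left_mono mult.assoc)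
qed

end
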